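(* Let $T$ be a tree. The following are equivalent: (i) $T$ is rooted and Dedekind complete; (ii) any two elements of $T$ have a greatest lower bound; (iii) every nonempty subset of $T$ has a greatest lower bound.
   Context: A tree is a partially ordered set in which the set of predecessors of each element is well-ordered. $T$ is rooted if it has exactly one minimal element. For a chain $C$ that is bounded above, its pseudo-supremum is the set of minimal elements of the set of upper bounds of $C$. $T$ is Dedekind complete if the pseudo-supremum of every nonempty chain that is bounded above is a supremum, i.e. consists of a single element (the least upper bound). *)

theory Defs
  imports Main
begin

text \<open>The tree is the whole type 'a, ordered by the partial order of class order.\<close>

definition well_ordered_set :: "'a::order set \<Rightarrow> bool" where
  "well_ordered_set S \<longleftrightarrow>
     (\<forall>a\<in>S. \<forall>b\<in>S. a \<le> b \<or> b \<le> a) \<and>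
     (\<forall>A. A \<subseteq> S \<and> A \<noteq> {} \<longrightarrow> (\<exists>m\<in>A. \<forall>a\<in>A. m \<le> a))"

definition is_tree :: "'a::order itself \<Rightarrow> bool" where
  "is_tree _ \<longleftrightarrow> (\<forall>x::'a. well_ordered_set {y. y < x})"

definition minimal_elem :: "'a::order \<Rightarrow> bool" where
  "minimal_elem r \<longleftrightarrow> \<not> (\<exists>y. y < r)"

definition rooted :: "'a::order itself \<Rightarrow> bool" where
  "rooted _ \<longleftrightarrow> (\<exists>!r::'a. minimal_elem r)"

definition is_chain :: "'a::order set \<Rightarrow> bool" where
  "is_chain C \<longleftrightarrow> (\<forall>a\<in>C. \<forall>b\<in>C. a \<le> b \<or> b \<le> a)"

definition upper_bounds :: "'a::order set \<Rightarrow> 'a set" where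
  "upper_bounds C = {u. \<forall>c\<in>C. c \<le> u}"

definition pseudo_sup :: "'a::order set \<Rightarrow> 'a set" where
  "pseudo_sup C = {u \<in> upper_bounds C. \<not> (\<exists>v \<in> upper_bounds C. v < u)}"

definition dedekind_complete :: "'a::order itself \<Rightarrow> bool" where
  "dedekind_complete _ \<longleftrightarrow>
     (\<forall>C::'a set. is_chain C \<and> C \<noteq> {} \<and> upper_bounds C \<noteq> {} \<longrightarrow>
        (\<exists>s. pseudo_sup C = {s}))"

definition is_glb :: "'a::order set \<Rightarrow> 'a \<Rightarrow> bool" where
  "is_glb A g \<longleftrightarrow> (\<forall>a\<in>A. g \<le> a) \<and> (\<forall>l. (\<forall>a\<in>A. l \<le> a) \<longrightarrow> l \<le> g)"

end

theory Submission
  imports Defs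
begin

lemma down_min:
  assumes T: "is_tree TYPE('a::order)"
    and S: "S \<subseteq> {u::'a. u \<le> x}" "S \<noteq> {}"
  shows "\<exists>m\<in>S. \<forall>s\<in>S. m \<le> s"
proof (cases "S - {x} = {}")
  case True
  then have "S = {x}" using S by blast
  then show ?thesis by auto
next
  case False
  have "well_ordered_set {y::'a. y < x}" using T unfolding is_tree_def by blast
  moreover have "S - {x} \<subseteq> {y. y < x}" using S by auto
  ultimately obtain m where m: "m \<in> S - {x}" "\<forall>a\<in>S - {x}. m \<le> a"
    using False unfolding well_ordered_set_def by blast
  have "m \<le> x" using m S by auto
  then show ?thesis using m by (metis Diff_iff singletonD)
qed

lemma ii_iii:
  assumes T: "is_tree TYPE('a::order)"
    and G: "\<forall>x y :: 'a. \<exists>g. is_glb {x, y} g"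
    and A: "(A::'a set) \<noteq> {}"
  shows "\<exists>g. is_glb A g"
proof -
  obtain a where a: "a \<in> A" using A by blast
  obtain f where f: "\<And>b. is_glb {a, b} (f b)" using G by metis
  have fa: "\<And>b. f b \<le> a" "\<And>b. f b \<le> b" using f unfolding is_glb_def by auto
  have "f ` A \<subseteq> {u. u \<le> a}" "f ` A \<noteq> {}" using fa a by auto
  then obtain m where m: "m \<in> f ` A" "\<forall>s\<in>f ` A. m \<le> s"
    using down_min[OF T] by blast
  have "is_glb A m"
    unfolding is_glb_def
  proof (intro conjI allI impI ballI)
    fix b assume "b \<in> A"
    then show "m \<le> b" using m fa by (meson image_eqI order_trans)
  next
    fix l assume l: "\<forall>b\<in>A. l \<le> b"
    from m obtain b where b: "b \<in> A" "m = f b" by blast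
    have "l \<le> a" "l \<le> b" using l a b by auto
    then show "l \<le> m" using f[of b] b unfolding is_glb_def by auto
  qed
  then show ?thesis by blast
qed

lemma iii_i:
  assumes G: "\<forall>A :: 'a::order set. A \<noteq> {} \<longrightarrow> (\<exists>g. is_glb A g)"
  shows "rooted TYPE('a) \<and> dedekind_complete TYPE('a)"
proof
  obtain g :: 'a where g: "is_glb UNIV g" using G by blast
  then have gle: "\<And>x. g \<le> x" unfolding is_glb_def by auto
  have "minimal_elem g" unfolding minimal_elem_def using gle by (meson leD)
  moreover have "\<And>r. minimal_elem r \<Longrightarrow> r = g"
    unfolding minimal_elem_def using gle by (metis order.not_eq_order_implies_strict)
  ultimately show "rooted TYPE('a)" unfolding rooted_def by blast
next
  show "dedekind_complete TYPE('a)" unfolding dedekind_complete_def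
  proof (intro allI impI)
    fix C :: "'a set"
    assume C: "is_chain C \<and> C \<noteq> {} \<and> upper_bounds C \<noteq> {}"
    then obtain g where g: "is_glb (upper_bounds C) g" using G by blast
    have gU: "g \<in> upper_bounds C" using g unfolding is_glb_def upper_bounds_def by auto
    have "pseudo_sup C = {g}"
      using g gU unfolding pseudo_sup_def is_glb_def
      by (auto dest: leD simp: order.order_iff_strict)
    then show "\<exists>s. pseudo_sup C = {s}" by blast
  qed
qed

lemma i_ii:
  assumes T: "is_tree TYPE('a::order)"
    and R: "rooted TYPE('a)" and D: "dedekind_complete TYPE('a)"
  shows "\<exists>g. is_glb {x::'a, y} g"
proof -
  obtain r :: 'a where r: "minimal_elem r" "\<And>r'. minimal_elem r' \<Longrightarrow> r' = r"
    using R unfolding rooted_def by blast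
  have rle: "r \<le> z" for z :: 'a
  proof -
    obtain m where m: "m \<in> {u. u \<le> z}" "\<forall>s\<in>{u. u \<le> z}. m \<le> s"
      using down_min[OF T, of "{u. u \<le> z}" z] by blast
    have "minimal_elem m" unfolding minimal_elem_def
    proof
      assume "\<exists>y. y < m"
      then obtain y where y: "y < m" by blast
      then have "y \<le> z" using m by auto
      then have "m \<le> y" using m by auto
      then show False using y by auto
    qed
    then show ?thesis using r m by auto
  qed
  define L where "L = {z. z \<le> x \<and> z \<le> y}"
  have chain: "is_chain L"
  proof -
    have "well_ordered_set {u. u < x}" using T unfolding is_tree_def by blast
    then have wo: "\<forall>a\<in>{u. u < x}. \<forall>b\<in>{u. u < x}. a \<le> b \<or> b \<le> a"
      unfolding well_ordered_set_def by blast
    show ?thesis unfolding is_chain_def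
    proof (intro ballI)
      fix a b assume ab: "a \<in> L" "b \<in> L"
      then have "a \<le> x" "b \<le> x" unfolding L_def by auto
      then show "a \<le> b \<or> b \<le> a"
      proof (cases "a = x \<or> b = x")
        case True
        then show ?thesis using \<open>a \<le> x\<close> \<open>b \<le> x\<close> by blast
      next
        case False
        then have "a < x" "b < x" using \<open>a \<le> x\<close> \<open>b \<le> x\<close> by (auto simp: less_le)
        then show ?thesis using wo by blast
      qed
    qed
  qed
  have "r \<in> L" using rle unfolding L_def by auto
  moreover have "x \<in> upper_bounds L" unfolding upper_bounds_def L_def by auto
  ultimately obtain s where s: "pseudo_sup L = {s}"
    using D chain unfolding dedekind_complete_def by blast
  have below: "s \<le> w" if w: "w \<in> upper_bounds L" for w
  proof -
    define S where "S = {u. u \<le> w \<and> u \<in> upper_bounds L}"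
    have "S \<subseteq> {u. u \<le> w}" unfolding S_def by blast
    moreover have "w \<in> S" unfolding S_def using w by simp
    then have "S \<noteq> {}" by blast
    ultimately have "\<exists>m\<in>S. \<forall>s\<in>S. m \<le> s" by (rule down_min[OF T])
    then obtain m where m0: "m \<in> S" "\<forall>s\<in>S. m \<le> s" by (elim bexE)
    have m: "m \<le> w" "m \<in> upper_bounds L"
      "\<forall>u. u \<le> w \<and> u \<in> upper_bounds L \<longrightarrow> m \<le> u"
      using m0 unfolding S_def by auto
    have "\<not> (\<exists>v \<in> upper_bounds L. v < m)"
    proof
      assume "\<exists>v \<in> upper_bounds L. v < m"
      then obtain v where v: "v \<in> upper_bounds L" "v < m" by blast
      then have "v \<le> w" using m(1) by auto
      then have "m \<le> v" using m(3) v by auto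
      then show False using v by auto
    qed
    then have "m \<in> pseudo_sup L" unfolding pseudo_sup_def using m by blast
    then show ?thesis using s m by auto
  qed
  have "x \<in> upper_bounds L" "y \<in> upper_bounds L" unfolding upper_bounds_def L_def by auto
  then have "s \<le> x" "s \<le> y" using below by auto
  moreover have "s \<in> upper_bounds L" using s unfolding pseudo_sup_def by auto
  ultimately have "is_glb {x, y} s" unfolding is_glb_def
  proof (intro conjI allI impI)
    show "\<forall>a\<in>{x, y}. s \<le> a" using \<open>s \<le> x\<close> \<open>s \<le> y\<close> by blast
  next
    fix l assume "\<forall>a\<in>{x, y}. l \<le> a"
    then have "l \<in> L" unfolding L_def by auto
    then show "l \<le> s" using \<open>s \<in> upper_bounds L\<close> unfolding upper_bounds_def by auto
  qed
  then show ?thesis by blast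
qed

theorem theorem3p1:
  assumes "is_tree TYPE('a::order)"
  shows "((rooted TYPE('a) \<and> dedekind_complete TYPE('a))
            \<longleftrightarrow> (\<forall>x y :: 'a. \<exists>g. is_glb {x, y} g))
       \<and> ((\<forall>x y :: 'a. \<exists>g. is_glb {x, y} g)
            \<longleftrightarrow> (\<forall>A :: 'a set. A \<noteq> {} \<longrightarrow> (\<exists>g. is_glb A g)))"
proof -
  have A: "\<forall>x y :: 'a. \<exists>g. is_glb {x, y} g"
    if H: "rooted TYPE('a) \<and> dedekind_complete TYPE('a)"
  proof (intro allI)
    fix x y :: 'a
    show "\<exists>g. is_glb {x, y} g"
      using i_ii[OF assms conjunct1[OF H] conjunct2[OF H]] .
  qed
  have B: "\<forall>A :: 'a set. A \<noteq> {} \<longrightarrow> (\<exists>g. is_glb A g)"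
    if H: "\<forall>x y :: 'a. \<exists>g. is_glb {x, y} g"
  proof (intro allI impI)
    fix A :: "'a set"
    assume "A \<noteq> {}"
    then show "\<exists>g. is_glb A g" by (rule ii_iii[OF assms H])
  qed
  have C: "\<forall>x y :: 'a. \<exists>g. is_glb {x, y} g"
    if H: "\<forall>A :: 'a set. A \<noteq> {} \<longrightarrow> (\<exists>g. is_glb A g)"
  proof (intro allI)
    fix x y :: 'a
    have "{x, y} \<noteq> {}" by simp
    then show "\<exists>g. is_glb {x, y} g" using H by simp
  qed
  have D: "rooted TYPE('a) \<and> dedekind_complete TYPE('a)"
    if H: "\<forall>x y :: 'a. \<exists>g. is_glb {x, y} g"
    by (rule iii_i) (rule B[OF H])
  show ?thesis
  proof (rule conjI)
    show "(rooted TYPE('a) \<and> dedekind_complete TYPE('a)) = (\<forall>x y :: 'a. \<exists>g. is_glb {x, y} g)"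
      using A D by (rule iffI)
    show "(\<forall>x y :: 'a. \<exists>g. is_glb {x, y} g) = (\<forall>A :: 'a set. A \<noteq> {} \<longrightarrow> (\<exists>g. is_glb A g))"
      using B C by (rule iffI)
  qed
qed

end
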